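(* Let $G$ be a finite graph with $v$ vertices and girth $\ell(G)$ (the length of a shortest cycle of $G$, with $\ell(G)=\infty$ if $G$ has no cycle). Let $m\ge 3$ and $0<i<\ell(G)$. Then $H^{i,j}_{\mathcal A_m}(G)=0$ for every $j\ge (m-1)(v-i)$.
   Context: For $m\ge 2$ let $\mathcal A_m=\mathbb Z[x]/(x^m)$. For a finite graph $G$ with vertex set $V(G)$, edge set $E(G)$ (with a fixed total order), and $s\subseteq E(G)$, let $[G:s]$ be the spanning subgraph with vertex set $V(G)$ and edge set $s$, and $k(s)$ its number of connected components. An enhanced state is a pair $(s,c)$ where $s\subseteq E(G)$ and $c$ assigns to each component $C$ of $[G:s]$ an exponent $c(C)\in\{0,\dots,m-1\}$ (i.e. a weight $x^{c(C)}$); its bidegree is $(i,j)=(|s|,\sum_C c(C))$. The cochain group $C^{i,j}_{\mathcal A_m}(G)$ is the free abelian group on enhanced states of bidegree $(i,j)$ (equivalently the degree-$j$ part of $\bigoplus_{|s|=i}\mathcal A_m^{\otimes k(s)}$, one tensor factor per component). The differential $d:C^{i,j}\to C^{i+1,j}$ is $d=\sum_{e\notin s}(-1)^{|\{f\in s: f<e\}|}d_e$, where for $e\notin s$: if $e$ joins two different components $C_1,C_2$ of $[G:s]$, then $d_e(s,c)$ is the enhanced state on $s\cup\{e\}$ in which the merged component gets weight $x^{c(C_1)}x^{c(C_2)}$ in $\mathcal A_m$ (so $d_e(s,c)=0$ if $c(C_1)+c(C_2)\ge m$) and all other components keep their weights; if both endpoints of $e$ lie in the same component of $[G:s]$, $d_e(s,c)$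 is the enhanced state on $s\cup\{e\}$ with the same weights (identity map). $H^{i,j}_{\mathcal A_m}(G)$ denotes the cohomology of this complex (chromatic graph cohomology with algebra $\mathcal A_m$). *)

theory Defs
  imports Main "HOL-Library.Extended_Nat"
begin

text \<open>A finite (multi)graph is given by a finite vertex set V and a list es of edges;
 edge number k (k < length es) joins the endpoints es ! k.  The total order on edges
 is the order of the indices.\<close>

definition wf_graph :: "'a set \<Rightarrow> ('a \<times> 'a) list \<Rightarrow> bool" where
  "wf_graph V es \<longleftrightarrow> finite V \<and> (\<forall>(a,b)\<in>set es. a \<in> V \<and> b \<in> V)"

definition is_cycle_length :: "('a \<times> 'a) list \<Rightarrow> nat \<Rightarrow> bool" where
  "is_cycle_length es k \<longleftrightarrow> k \<ge> 1 \<and>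
     (\<exists>e w. inj_on e {..<k} \<and> inj_on w {..<k} \<and>
        (\<forall>t<k. e t < length es \<and>
           (es ! e t = (w t, w (Suc t mod k)) \<or> es ! e t = (w (Suc t mod k), w t))))"

definition girth :: "('a \<times> 'a) list \<Rightarrow> enat" where
  "girth es = Inf {enat k | k. is_cycle_length es k}"

definition edge_rel :: "('a \<times> 'a) list \<Rightarrow> nat set \<Rightarrow> ('a \<times> 'a) set" where
  "edge_rel es s = {(a,b). \<exists>e\<in>s. e < length es \<and> (es ! e = (a,b) \<or> es ! e = (b,a))}"

definition comp_of :: "('a \<times> 'a) list \<Rightarrow> nat set \<Rightarrow> 'a \<Rightarrow> 'a set" where
  "comp_of es s x = (edge_rel es s)\<^sup>* `` {x}"

definition comps :: "'a set \<Rightarrow> ('a \<times> 'a) list \<Rightarrow> nat set \<Rightarrow> 'a set set" where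
  "comps V es s = comp_of es s ` V"

text \<open>Enhanced states: (s, c) with c the exponent on each component (0 off components).\<close>
type_synonym 'a state = "nat set \<times> ('a set \<Rightarrow> nat)"

definition states :: "'a set \<Rightarrow> ('a \<times> 'a) list \<Rightarrow> nat \<Rightarrow> nat \<Rightarrow> nat \<Rightarrow> 'a state set" where
  "states V es m i j = {(s, c). s \<subseteq> {..<length es} \<and> card s = i \<and>
       (\<forall>C\<in>comps V es s. c C < m) \<and> (\<forall>C. C \<notin> comps V es s \<longrightarrow> c C = 0) \<and>
       (\<Sum>C\<in>comps V es s. c C) = j}"

text \<open>The component map d_e applied to a basis state; None means 0.\<close>
definition d_edge :: "'a set \<Rightarrow> ('a \<times> 'a) list \<Rightarrow> nat \<Rightarrow> nat \<Rightarrow> 'a state \<Rightarrow> 'a state option" where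
  "d_edge V es m e st = (case st of (s, c) \<Rightarrow>
     (let Ca = comp_of es s (fst (es ! e)); Cb = comp_of es s (snd (es ! e)); s' = insert e s in
      if Ca = Cb then Some (s', c)
      else if c Ca + c Cb \<ge> m then None
      else Some (s', (\<lambda>C. if C = Ca \<union> Cb then c Ca + c Cb
                          else if C \<in> comps V es s' then c C else 0))))"

definition d_state :: "'a set \<Rightarrow> ('a \<times> 'a) list \<Rightarrow> nat \<Rightarrow> 'a state \<Rightarrow> 'a state \<Rightarrow> int" where
  "d_state V es m st t = (\<Sum>e\<in>{e. e < length es \<and> e \<notin> fst st}.
      if d_edge V es m e st = Some t then (-1) ^ card {f\<in>fst st. f < e} else 0)"

definition cochain :: "'a set \<Rightarrow> ('a \<times> 'a) list \<Rightarrow> nat \<Rightarrow> nat \<Rightarrow> nat \<Rightarrow> ('a state \<Rightarrow> int) \<Rightarrow> bool" where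
  "cochain V es m i j x \<longleftrightarrow> (\<forall>st. st \<notin> states V es m i j \<longrightarrow> x st = 0)"

definition dco :: "'a set \<Rightarrow> ('a \<times> 'a) list \<Rightarrow> nat \<Rightarrow> nat \<Rightarrow> nat \<Rightarrow> ('a state \<Rightarrow> int) \<Rightarrow> 'a state \<Rightarrow> int" where
  "dco V es m i j x = (\<lambda>t. \<Sum>st\<in>states V es m i j. x st * d_state V es m st t)"

definition cohom_vanishes :: "'a set \<Rightarrow> ('a \<times> 'a) list \<Rightarrow> nat \<Rightarrow> nat \<Rightarrow> nat \<Rightarrow> bool" where
  "cohom_vanishes V es m i j \<longleftrightarrow>
     (\<forall>x. cochain V es m i j x \<and> dco V es m i j x = (\<lambda>_. 0) \<longrightarrow>
        (\<exists>y. cochain V es m (i - 1) j y \<and> dco V es m (i - 1) j y = x))"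

end

theory Submission imports Defs begin

lemma sym_edge_rel: "sym (edge_rel es s)"
  by (auto simp: sym_def edge_rel_def)

lemma K_sym: "(x,y) \<in> (edge_rel es s)\<^sup>* \<Longrightarrow> (y,x) \<in> (edge_rel es s)\<^sup>*"
  by (meson sym_rtrancl sym_edge_rel symD)

lemma comp_self: "x \<in> comp_of es s x"
  by (simp add: comp_of_def)

lemma comp_eq: "y \<in> comp_of es s x \<Longrightarrow> comp_of es s y = comp_of es s x"
  unfolding comp_of_def
  by (auto dest: K_sym intro: rtrancl_trans)

lemma comp_eq_iff: "comp_of es s x = comp_of es s y \<longleftrightarrow> y \<in> comp_of es s x"
  by (metis comp_eq comp_self)

lemma edge_rel_insert: "e < length es \<Longrightarrow> es!e = (p,q) \<Longrightarrow>
   edge_rel es (insert e s) = edge_rel es s \<union> {(p,q),(q,p)}"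
  by (auto simp: edge_rel_def)

lemma edge_in_comp: "e \<in> s \<Longrightarrow> e < length es \<Longrightarrow> es!e = (p,q) \<Longrightarrow> q \<in> comp_of es s p"
  unfolding comp_of_def edge_rel_def by auto

lemma comp_insert:
  assumes e: "e < length es" "es!e = (p,q)"
  shows "comp_of es (insert e s) x = (if x \<in> comp_of es s p \<union> comp_of es s q
            then comp_of es s p \<union> comp_of es s q else comp_of es s x)"
proof -
  let ?R = "edge_rel es s" and ?R' = "edge_rel es (insert e s)"
  let ?C = "comp_of es s"
  define f where "f x = (if x \<in> ?C p \<union> ?C q then ?C p \<union> ?C q else ?C x)" for x
  have R': "?R' = ?R \<union> {(p,q),(q,p)}" using edge_rel_insert[OF e] .
  have RK: "(y,z) \<in> ?R \<Longrightarrow> z \<in> ?C y" for y z unfolding comp_of_def by auto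
  have 1: "y \<in> f x" if "(x,y) \<in> ?R'\<^sup>*" for y
    using that
  proof (induction rule: rtrancl_induct)
    case base then show ?case by (simp add: f_def comp_self)
  next
    case (step y z)
    from step.hyps(2) R' have cases: "(y,z) \<in> ?R \<or> (y,z) = (p,q) \<or> (y,z) = (q,p)" by auto
    show ?case
    proof (cases "x \<in> ?C p \<union> ?C q")
      case True
      then have fx: "f x = ?C p \<union> ?C q" by (simp add: f_def)
      with step.IH have y: "y \<in> ?C p \<union> ?C q" by simp
      from cases show ?thesis
      proof (elim disjE)
        assume "(y,z) \<in> ?R"
        then have "z \<in> ?C y" by (rule RK)
        with y show ?thesis unfolding fx by (metis Un_iff comp_eq)
      next
        assume "(y,z) = (p,q)"
        then show ?thesis unfolding fx using comp_self[of q es s] by simp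
      next
        assume "(y,z) = (q,p)"
        then show ?thesis unfolding fx using comp_self[of p es s] by simp
      qed
    next
      case False
      then have fx: "f x = ?C x" by (simp add: f_def)
      with step.IH have y: "y \<in> ?C x" by simp
      from cases show ?thesis
      proof (elim disjE)
        assume "(y,z) \<in> ?R"
        then have "z \<in> ?C y" by (rule RK)
        with y show ?thesis unfolding fx by (metis comp_eq)
      next
        assume "(y,z) = (p,q)"
        with y have "?C p = ?C x" by (simp add: comp_eq)
        with False show ?thesis by (metis Un_iff comp_self)
      next
        assume "(y,z) = (q,p)"
        with y have "?C q = ?C x" by (simp add: comp_eq)
        with False show ?thesis by (metis Un_iff comp_self)
      qed
    qed
  qed
  have mono: "?R\<^sup>* \<subseteq> ?R'\<^sup>*" using R' by (intro rtrancl_mono) auto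
  have pq: "(p,q) \<in> ?R'\<^sup>*" "(q,p) \<in> ?R'\<^sup>*" unfolding R' by (simp_all add: r_into_rtrancl)
  have toP: "(z,p) \<in> ?R'\<^sup>*" if "z \<in> ?C p \<union> ?C q" for z
  proof -
    from that have "(p,z) \<in> ?R\<^sup>* \<or> (q,z) \<in> ?R\<^sup>*" by (auto simp: comp_of_def)
    then have "(z,p) \<in> ?R\<^sup>* \<or> (z,q) \<in> ?R\<^sup>*" by (auto dest: K_sym)
    then show ?thesis using mono pq by (meson rtrancl_trans subsetD)
  qed
  have 2: "(x,y) \<in> ?R'\<^sup>*" if "y \<in> f x" for y
  proof (cases "x \<in> ?C p \<union> ?C q")
    case True
    with that have "y \<in> ?C p \<union> ?C q" by (simp add: f_def)
    from toP[OF this] have "(p,y) \<in> ?R'\<^sup>*"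
      by (rule K_sym)
    with toP[OF True] show ?thesis by (meson rtrancl_trans)
  next
    case False
    with that have "(x,y) \<in> ?R\<^sup>*" by (simp add: f_def comp_of_def)
    with mono show ?thesis by auto
  qed
  have "comp_of es (insert e s) x = f x"
    using 1 2 unfolding comp_of_def by auto
  then show ?thesis by (simp add: f_def)
qed


lemma short_walk:
  assumes "(p,q) \<in> R\<^sup>*"
  shows "\<exists>k w. w 0 = p \<and> w k = q \<and> (\<forall>t<k. (w t, w (Suc t)) \<in> R) \<and> inj_on w {..k}"
proof -
  from assms obtain k0 where "(p,q) \<in> R ^^ k0" using rtrancl_power by blast
  define k where "k = (LEAST k. (p,q) \<in> R ^^ k)"
  have kR: "(p,q) \<in> R ^^ k" unfolding k_def by (rule LeastI) fact
  have kmin: "\<And>k'. (p,q) \<in> R ^^ k' \<Longrightarrow> k \<le> k'" unfolding k_def by (rule Least_le)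
  from kR obtain w where w: "w 0 = p" "w k = q" "\<forall>t<k. (w t, w (Suc t)) \<in> R"
    unfolding relpow_fun_conv by blast
  have noshort: False if ab: "a < b" "b \<le> k" "w a = w b" for a b
  proof -
    define d where "d = b - a"
    have d: "d > 0" "a + d = b" using ab by (auto simp: d_def)
    define w' where "w' t = (if t < a then w t else w (t + d))" for t
    have "w' 0 = p"
    proof (cases "a = 0")
      case True then show ?thesis using d ab w by (simp add: w'_def)
    next
      case False then show ?thesis using w by (simp add: w'_def)
    qed
    moreover have "w' (k - d) = q"
    proof -
      have "\<not> k - d < a" using d ab by linarith
      then have "w' (k - d) = w (k - d + d)" by (simp add: w'_def)
      also have "k - d + d = k" using d ab by linarith
      finally show ?thesis using w by simp
    qed
    moreover have "\<forall>t<k - d. (w' t, w' (Suc t)) \<in> R"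
    proof (intro allI impI)
      fix t assume t: "t < k - d"
      show "(w' t, w' (Suc t)) \<in> R"
      proof (cases "Suc t < a")
        case True
        then have "w' t = w t" "w' (Suc t) = w (Suc t)" by (simp_all add: w'_def)
        moreover have "t < k" using True ab by linarith
        ultimately show ?thesis using w by simp
      next
        case False
        show ?thesis
        proof (cases "Suc t = a")
          case True
          then have "w' t = w t" "w' (Suc t) = w (Suc t + d)" by (simp_all add: w'_def)
          moreover have "w (Suc t + d) = w (Suc t)" using True d ab by simp
          moreover have "t < k" using True ab by linarith
          ultimately show ?thesis using w by simp
        next
          case False2: False
          with False have ta: "\<not> t < a" "\<not> Suc t < a" by auto
          then have "w' t = w (t + d)" "w' (Suc t) = w (Suc (t + d))"
            by (simp_all add: w'_def)
          moreover have "t + d < k" using t d ab by linarith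
          ultimately show ?thesis using w by simp
        qed
      qed
    qed
    ultimately have "(p,q) \<in> R ^^ (k - d)" unfolding relpow_fun_conv by blast
    from kmin[OF this] d ab show False by linarith
  qed
  have "inj_on w {..k}"
  proof (rule inj_onI)
    fix a b assume a: "a \<in> {..k}" and b: "b \<in> {..k}" and eq: "w a = w b"
    show "a = b"
    proof (rule linorder_cases[of a b])
      assume "a < b" then show ?thesis using noshort[of a b] b eq by auto
    next
      assume "b < a" then show ?thesis using noshort[of b a] a eq by auto
    qed
  qed
  with w show ?thesis by blast
qed

lemma cycle_from_conn:
  assumes s: "finite s" "s \<subseteq> {..<length es}" and e: "e < length es" "e \<notin> s" "es!e = (p,q)"
    and conn: "q \<in> comp_of es s p"
  shows "\<exists>k. k \<le> card s + 1 \<and> is_cycle_length es k"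
proof -
  let ?R = "edge_rel es s"
  from conn have "(p,q) \<in> ?R\<^sup>*" by (simp add: comp_of_def)
  from short_walk[OF this] obtain k w where w: "w 0 = p" "w k = q"
    "\<forall>t<k. (w t, w (Suc t)) \<in> ?R" "inj_on w {..k}" by blast
  have "\<forall>t<k. \<exists>f. f \<in> s \<and> f < length es \<and> (es!f = (w t, w (Suc t)) \<or> es!f = (w (Suc t), w t))"
    using w(3) unfolding edge_rel_def by blast
  then have "\<exists>ed. \<forall>t. t < k \<longrightarrow> ed t \<in> s \<and> ed t < length es \<and>
      (es!(ed t) = (w t, w (Suc t)) \<or> es!(ed t) = (w (Suc t), w t))"
    by (intro choice) blast
  then obtain ed where ed: "\<forall>t<k. ed t \<in> s \<and> ed t < length es \<and>
      (es!(ed t) = (w t, w (Suc t)) \<or> es!(ed t) = (w (Suc t), w t))"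
    by blast
  have injed: "inj_on ed {..<k}"
  proof (rule inj_onI)
    fix a b assume a: "a \<in> {..<k}" and b: "b \<in> {..<k}" and eq: "ed a = ed b"
    show "a = b"
    proof (rule ccontr)
      assume "a \<noteq> b"
      have A: "es!(ed a) = (w a, w (Suc a)) \<or> es!(ed a) = (w (Suc a), w a)" using ed a by auto
      have B: "es!(ed a) = (w b, w (Suc b)) \<or> es!(ed a) = (w (Suc b), w b)" using ed b eq by auto
      from A B have "(w a = w b \<and> w (Suc a) = w (Suc b)) \<or> (w a = w (Suc b) \<and> w (Suc a) = w b)"
        by (elim disjE) auto
      moreover have "a \<in> {..k}" "b \<in> {..k}" "Suc a \<in> {..k}" "Suc b \<in> {..k}" using a b by auto
      ultimately show False
      proof (elim disjE conjE)
        assume "w a = w b" "a \<in> {..k}" "b \<in> {..k}"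
        then have "a = b" using inj_onD[OF w(4)] by blast
        with \<open>a \<noteq> b\<close> show False by simp
      next
        assume h: "w a = w (Suc b)" "w (Suc a) = w b" "a \<in> {..k}" "b \<in> {..k}" "Suc a \<in> {..k}" "Suc b \<in> {..k}"
        then have "a = Suc b" using inj_onD[OF w(4)] by blast
        moreover have "Suc a = b" using h inj_onD[OF w(4)] by blast
        ultimately show False by simp
      qed
    qed
  qed
  have "ed ` {..<k} \<subseteq> s" using ed by auto
  then have "card (ed ` {..<k}) \<le> card s" using card_mono[OF s(1)] by blast
  then have kle: "k \<le> card s" using card_image[OF injed] by simp
  define E where "E t = (if t < k then ed t else e)" for t
  have "is_cycle_length es (Suc k)"
    unfolding is_cycle_length_def
  proof (intro conjI exI[of _ E] exI[of _ w])
    show "1 \<le> Suc k" by simp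
    show "inj_on E {..<Suc k}"
    proof (rule inj_onI)
      fix a b assume a: "a \<in> {..<Suc k}" and b: "b \<in> {..<Suc k}" and eq: "E a = E b"
      show "a = b"
      proof (cases "a < k"; cases "b < k")
        assume "a < k" "b < k" then show ?thesis using eq injed by (auto simp: E_def inj_on_def)
      next
        assume "a < k" "\<not> b < k" then show ?thesis using eq ed e by (auto simp: E_def)
      next
        assume "\<not> a < k" "b < k" then show ?thesis using eq ed e by (auto simp: E_def)
      next
        assume "\<not> a < k" "\<not> b < k" then show ?thesis using a b by auto
      qed
    qed
    show "inj_on w {..<Suc k}" using w(4) by (simp add: lessThan_Suc_atMost)
    show "\<forall>t<Suc k. E t < length es \<and> (es ! E t = (w t, w (Suc t mod Suc k)) \<or> es ! E t = (w (Suc t mod Suc k), w t))"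
    proof (intro allI impI)
      fix t assume t: "t < Suc k"
      show "E t < length es \<and> (es ! E t = (w t, w (Suc t mod Suc k)) \<or> es ! E t = (w (Suc t mod Suc k), w t))"
      proof (cases "t < k")
        case True
        then show ?thesis using ed by (auto simp: E_def)
      next
        case False
        with t have "t = k" by auto
        then show ?thesis using e w by (auto simp: E_def)
      qed
    qed
  qed
  with kle show ?thesis by (intro exI[of _ "Suc k"]) auto
qed

lemma girth_le:
  assumes "is_cycle_length es k" shows "girth es \<le> enat k"
  unfolding girth_def using assms by (auto intro: Inf_lower)


locale L =
  fixes V :: "'a set" and es :: "('a \<times> 'a) list" and m i j :: nat
  assumes wf: "wf_graph V es" and m3: "m \<ge> 3" and ipos: "0 < i"
    and ig: "enat i < girth es" and jb: "j \<ge> (m - 1) * (card V - i)"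
begin

lemma finV: "finite V" using wf by (simp add: wf_graph_def)

lemma endpts: "e < length es \<Longrightarrow> fst (es!e) \<in> V \<and> snd (es!e) \<in> V"
proof -
  assume "e < length es"
  then have "es!e \<in> set es" by simp
  with wf show ?thesis unfolding wf_graph_def by (cases "es!e") fastforce
qed

lemma no_short:
  assumes "s \<subseteq> {..<length es}" "card s < i" "e < length es" "e \<notin> s"
  shows "snd (es!e) \<notin> comp_of es s (fst (es!e))"
proof
  assume h: "snd (es!e) \<in> comp_of es s (fst (es!e))"
  have fin: "finite s" using assms(1) finite_subset by blast
  have "es!e = (fst (es!e), snd (es!e))" by simp
  from cycle_from_conn[OF fin assms(1) assms(3) assms(4) this h]
  obtain k where k: "k \<le> card s + 1" "is_cycle_length es k" by blast
  have "girth es \<le> enat k" using girth_le[OF k(2)] .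
  also have "enat k \<le> enat i" using k(1) assms(2) by simp
  finally show False using ig by simp
qed

lemma edge_rel_V: "(y,z) \<in> edge_rel es s \<Longrightarrow> z \<in> V"
  unfolding edge_rel_def using endpts by fastforce

lemma comp_sub_V: "x \<in> V \<Longrightarrow> comp_of es s x \<subseteq> V"
proof
  fix y assume x: "x \<in> V" and "y \<in> comp_of es s x"
  then have "(x,y) \<in> (edge_rel es s)\<^sup>*" by (simp add: comp_of_def)
  then show "y \<in> V" using x
    by (induction rule: rtrancl_induct) (auto dest: edge_rel_V)
qed

lemma comps_fin: "finite (comps V es s)"
  unfolding comps_def using finV by simp

lemma comps_Pow: "comps V es s \<subseteq> Pow V"
  unfolding comps_def using comp_sub_V by auto

definition topf :: "nat set \<Rightarrow> 'a set \<Rightarrow> nat" where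
  "topf s = (\<lambda>C. if C \<in> comps V es s then m - 1 else 0)"

definition topst :: "nat set \<Rightarrow> 'a state" where
  "topst s = (s, topf s)"

definition inE :: "nat set \<Rightarrow> nat \<Rightarrow> bool" where
  "inE s e \<longleftrightarrow> snd (es!e) \<in> comp_of es s (fst (es!e))"

lemma comp_insert':
  assumes "e < length es"
  shows "comp_of es (insert e s) x = (if x \<in> comp_of es s (fst (es!e)) \<union> comp_of es s (snd (es!e))
            then comp_of es s (fst (es!e)) \<union> comp_of es s (snd (es!e)) else comp_of es s x)"
  using comp_insert[OF assms, of "fst (es!e)" "snd (es!e)"] by simp

lemma inE_insert:
  assumes "e < length es" "inE s e"
  shows "comp_of es (insert e s) = comp_of es s"
proof
  fix x
  let ?p = "fst (es!e)" and ?q = "snd (es!e)"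
  have cq: "comp_of es s ?q = comp_of es s ?p"
    by (rule comp_eq) (use assms(2) in \<open>simp add: inE_def\<close>)
  show "comp_of es (insert e s) x = comp_of es s x"
  proof (cases "x \<in> comp_of es s ?p")
    case True
    then have "comp_of es s x = comp_of es s ?p" by (rule comp_eq)
    then show ?thesis unfolding comp_insert'[OF assms(1)] cq using True by simp
  next
    case False
    then show ?thesis unfolding comp_insert'[OF assms(1)] cq by simp
  qed
qed

lemma comps_merge:
  assumes e: "e < length es" and ne: "comp_of es s (fst (es!e)) \<noteq> comp_of es s (snd (es!e))"
  shows "comps V es (insert e s) = insert (comp_of es s (fst (es!e)) \<union> comp_of es s (snd (es!e)))
             (comps V es s - {comp_of es s (fst (es!e)), comp_of es s (snd (es!e))})"
    and "comp_of es s (fst (es!e)) \<union> comp_of es s (snd (es!e)) \<notin> comps V es s"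
    and "card (comps V es (insert e s)) = card (comps V es s) - 1"
proof -
  let ?p = "fst (es!e)" and ?q = "snd (es!e)"
  let ?C = "comp_of es s"
  have pV: "?p \<in> V" and qV: "?q \<in> V" using endpts[OF e] by auto
  show eq: "comps V es (insert e s) = insert (?C ?p \<union> ?C ?q) (comps V es s - {?C ?p, ?C ?q})"
  proof
    show "comps V es (insert e s) \<subseteq> insert (?C ?p \<union> ?C ?q) (comps V es s - {?C ?p, ?C ?q})"
    proof
      fix D assume "D \<in> comps V es (insert e s)"
      then obtain x where x: "x \<in> V" "D = comp_of es (insert e s) x" by (auto simp: comps_def)
      show "D \<in> insert (?C ?p \<union> ?C ?q) (comps V es s - {?C ?p, ?C ?q})"
      proof (cases "x \<in> ?C ?p \<union> ?C ?q")
        case True then show ?thesis using x comp_insert'[OF e] by simp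
      next
        case False
        then have "D = ?C x" using x comp_insert'[OF e] by simp
        moreover have "?C x \<noteq> ?C ?p" using False comp_self[of x es s] by auto
        moreover have "?C x \<noteq> ?C ?q" using False comp_self[of x es s] by auto
        ultimately show ?thesis using x by (auto simp: comps_def)
      qed
    qed
  next
    show "insert (?C ?p \<union> ?C ?q) (comps V es s - {?C ?p, ?C ?q}) \<subseteq> comps V es (insert e s)"
    proof
      fix D assume D: "D \<in> insert (?C ?p \<union> ?C ?q) (comps V es s - {?C ?p, ?C ?q})"
      show "D \<in> comps V es (insert e s)"
      proof (cases "D = ?C ?p \<union> ?C ?q")
        case True
        have "comp_of es (insert e s) ?p = ?C ?p \<union> ?C ?q"
          using comp_insert'[OF e, of s ?p] comp_self[of ?p es s] by simp
        then show ?thesis using True pV by (auto simp: comps_def)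
      next
        case False
        with D obtain x where x: "x \<in> V" "D = ?C x" "?C x \<noteq> ?C ?p" "?C x \<noteq> ?C ?q"
          by (auto simp: comps_def)
        then have "x \<notin> ?C ?p \<union> ?C ?q" using comp_eq[of x es s ?p] comp_eq[of x es s ?q] by blast
        then have "comp_of es (insert e s) x = D" using x comp_insert'[OF e] by simp
        then show ?thesis using x by (auto simp: comps_def)
      qed
    qed
  qed
  show nin: "?C ?p \<union> ?C ?q \<notin> comps V es s"
  proof
    assume "?C ?p \<union> ?C ?q \<in> comps V es s"
    then obtain x where x: "?C ?p \<union> ?C ?q = ?C x" by (auto simp: comps_def)
    have "?p \<in> ?C x" using x comp_self[of ?p es s] by blast
    then have "?C ?p = ?C x" by (rule comp_eq)
    then have "?q \<in> ?C ?p" using x comp_self[of ?q es s] by blast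
    then have "?C ?q = ?C ?p" by (rule comp_eq)
    with ne show False by simp
  qed
  have inn: "?C ?p \<in> comps V es s" "?C ?q \<in> comps V es s" using pV qV by (auto simp: comps_def)
  have "card (comps V es (insert e s)) = Suc (card (comps V es s - {?C ?p, ?C ?q}))"
    unfolding eq using nin comps_fin by (subst card_insert_disjoint) auto
  also have "card (comps V es s - {?C ?p, ?C ?q}) = card (comps V es s) - 2"
    using inn ne comps_fin by (subst card_Diff_subset) auto
  also have "card (comps V es s) \<ge> 2"
  proof -
    have "card {?C ?p, ?C ?q} \<le> card (comps V es s)" using inn comps_fin by (intro card_mono) auto
    then show ?thesis using ne by simp
  qed
  then have "Suc (card (comps V es s) - 2) = card (comps V es s) - 1" by simp
  finally show "card (comps V es (insert e s)) = card (comps V es s) - 1" .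
qed

lemma count_comps:
  assumes "finite s" shows "s \<subseteq> {..<length es} \<Longrightarrow> card s \<le> i \<Longrightarrow> card (comps V es s) + card s \<le> card V"
  using assms
proof (induction s rule: finite_induct)
  case empty
  have "comps V es {} \<subseteq> (\<lambda>x. {x}) ` V"
    by (auto simp: comps_def comp_of_def edge_rel_def)
  then have "card (comps V es {}) \<le> card ((\<lambda>x. {x}) ` V)" using finV by (intro card_mono) auto
  also have "\<dots> \<le> card V" by (rule card_image_le[OF finV])
  finally show ?case by simp
next
  case (insert e F)
  have e: "e < length es" and F: "F \<subseteq> {..<length es}" using insert.prems by auto
  have cF: "card (insert e F) = Suc (card F)" using insert.hyps by simp
  with insert.prems have cFi: "card F < i" by simp
  have IH: "card (comps V es F) + card F \<le> card V" using insert.IH F cFi by simp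
  have "snd (es!e) \<notin> comp_of es F (fst (es!e))" using no_short[OF F cFi e insert.hyps(2)] .
  then have ne: "comp_of es F (fst (es!e)) \<noteq> comp_of es F (snd (es!e))" using comp_self by metis
  have pV: "fst (es!e) \<in> V" using endpts[OF e] by auto
  have "comps V es F \<noteq> {}" using pV by (auto simp: comps_def)
  then have "card (comps V es F) \<ge> 1" using comps_fin by (simp add: Suc_leI card_gt_0_iff)
  then show ?case using comps_merge(3)[OF e ne] IH cF by simp
qed

lemma top_states: "topst u \<in> states V es m i j \<longleftrightarrow>
     u \<subseteq> {..<length es} \<and> card u = i \<and> (m - 1) * card (comps V es u) = j"
  unfolding topst_def states_def topf_def using m3 comps_fin by auto

lemma states_top:
  assumes "st \<in> states V es m i j"
  shows "\<exists>u. st = topst u \<and> topst u \<in> states V es m i j"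
proof -
  obtain s c where st: "st = (s,c)" by (cases st)
  with assms have s: "s \<subseteq> {..<length es}" "card s = i" and cm: "\<forall>C\<in>comps V es s. c C < m"
    and c0: "\<forall>C. C \<notin> comps V es s \<longrightarrow> c C = 0" and cs: "(\<Sum>C\<in>comps V es s. c C) = j"
    by (auto simp: states_def)
  have fin: "finite s" using s finite_subset by blast
  have "card (comps V es s) + i \<le> card V" using count_comps[OF fin s(1)] s by simp
  then have "card (comps V es s) \<le> card V - i" by simp
  then have le: "(m - 1) * card (comps V es s) \<le> j" using jb
    by (meson le_trans mult_le_mono2)
  have all: "\<forall>C\<in>comps V es s. c C = m - 1"
  proof (rule ccontr)
    assume "\<not> (\<forall>C\<in>comps V es s. c C = m - 1)"
    then have "\<exists>C\<in>comps V es s. c C < m - 1" using cm by fastforce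
    then have "(\<Sum>C\<in>comps V es s. c C) < (\<Sum>C\<in>comps V es s. m - 1)"
      using cm comps_fin by (intro sum_strict_mono_ex1) fastforce+
    then show False using cs le by (simp add: mult.commute)
  qed
  have "c = topf s" unfolding topf_def using all c0 by auto
  then have "st = topst s" using st by (simp add: topst_def)
  with assms show ?thesis by blast
qed

lemma states_fin: "finite (states V es m k j')"
proof -
  have "states V es m k j' \<subseteq> Pow {..<length es} \<times>
      {c. \<forall>C. (C \<in> Pow V \<longrightarrow> c C \<in> {..<m}) \<and> (C \<notin> Pow V \<longrightarrow> c C = 0)}"
  proof
    fix st assume "st \<in> states V es m k j'"
    then obtain s c where st: "st = (s,c)" and s: "s \<subseteq> {..<length es}" and cm: "\<forall>C\<in>comps V es s. c C < m"
      and c0: "\<forall>C. C \<notin> comps V es s \<longrightarrow> c C = 0" by (auto simp: states_def)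
    have "\<forall>C. (C \<in> Pow V \<longrightarrow> c C \<in> {..<m}) \<and> (C \<notin> Pow V \<longrightarrow> c C = 0)"
      using cm c0 comps_Pow m3 by fastforce
    then show "st \<in> Pow {..<length es} \<times>
      {c. \<forall>C. (C \<in> Pow V \<longrightarrow> c C \<in> {..<m}) \<and> (C \<notin> Pow V \<longrightarrow> c C = 0)}" using st s by auto
  qed
  moreover have "finite (Pow {..<length es} \<times>
      {c. \<forall>C. (C \<in> Pow V \<longrightarrow> c C \<in> {..<m}) \<and> (C \<notin> Pow V \<longrightarrow> c C = 0)})"
    using finV by (intro finite_cartesian_product finite_set_of_finite_funs) auto
  ultimately show ?thesis by (rule finite_subset)
qed


definition Fl :: "nat set \<Rightarrow> nat set" where
  "Fl s = {e. e < length es \<and> inE s e}"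

definition amin :: "nat set \<Rightarrow> nat" where
  "amin s = Min (Fl s)"

definition C1 :: "nat set \<Rightarrow> 'a set" where
  "C1 s = comp_of es (s - {amin s}) (fst (es ! amin s))"

definition C2 :: "nat set \<Rightarrow> 'a set" where
  "C2 s = comp_of es (s - {amin s}) (snd (es ! amin s))"

definition gst :: "nat set \<Rightarrow> 'a state" where
  "gst s = (s - {amin s}, \<lambda>C. if C = C1 s then 1 else if C = C2 s then m - 2
       else if C \<in> comps V es (s - {amin s}) then m - 1 else 0)"

definition sgn :: "nat set \<Rightarrow> nat \<Rightarrow> int" where
  "sgn s e = (-1) ^ card {f\<in>s. f < e}"

lemma Fl_fin: "finite (Fl s)"
  by (rule finite_subset[of _ "{..<length es}"]) (auto simp: Fl_def)

lemma sub_Fl: "s \<subseteq> {..<length es} \<Longrightarrow> s \<subseteq> Fl s"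
proof
  fix e assume "s \<subseteq> {..<length es}" "e \<in> s"
  then have e: "e < length es" by auto
  have "es!e = (fst (es!e), snd (es!e))" by simp
  from edge_in_comp[OF \<open>e \<in> s\<close> e this] e show "e \<in> Fl s" by (simp add: Fl_def inE_def)
qed

lemma amin_props:
  assumes "s \<subseteq> {..<length es}" "s \<noteq> {}"
  shows "amin s \<in> Fl s" "\<And>f. f \<in> Fl s \<Longrightarrow> amin s \<le> f" "amin s < length es"
proof -
  have ne: "Fl s \<noteq> {}" using sub_Fl[OF assms(1)] assms(2) by blast
  show "amin s \<in> Fl s" unfolding amin_def using Fl_fin ne by (rule Min_in)
  then show "amin s < length es" by (simp add: Fl_def)
  show "\<And>f. f \<in> Fl s \<Longrightarrow> amin s \<le> f" unfolding amin_def using Fl_fin by (rule Min_le)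
qed

lemma Fl_cong: "comp_of es s = comp_of es u \<Longrightarrow> Fl s = Fl u"
  by (simp add: Fl_def inE_def)

lemma amin_cong: "comp_of es s = comp_of es u \<Longrightarrow> amin s = amin u"
  unfolding amin_def by (drule Fl_cong) simp

lemma comps_cong: "comp_of es s = comp_of es u \<Longrightarrow> comps V es s = comps V es u"
  by (simp add: comps_def)

lemma sgn_zero: "\<forall>f\<in>s. a \<le> f \<Longrightarrow> sgn s a = 1"
proof -
  assume "\<forall>f\<in>s. a \<le> f"
  then have "{f\<in>s. f < a} = {}" by auto
  then have "card {f\<in>s. f < a} = 0" by (simp only: card.empty)
  then show ?thesis unfolding sgn_def by (metis power_0)
qed

lemma sgn_ins:
  assumes "finite s" "a < e" "a \<notin> s" shows "sgn (insert a s) e = - sgn s e"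
proof -
  have "{f\<in>insert a s. f < e} = insert a {f\<in>s. f < e}" using assms by auto
  moreover have "a \<notin> {f\<in>s. f < e}" using assms by auto
  ultimately have "card {f\<in>insert a s. f < e} = Suc (card {f\<in>s. f < e})"
    using assms(1) by simp
  then show ?thesis by (simp add: sgn_def)
qed

lemma sgn_del: "sgn (s - {e}) e = sgn s e"
proof -
  have "{f\<in>s - {e}. f < e} = {f\<in>s. f < e}" by auto
  then show ?thesis by (simp add: sgn_def)
qed

lemma d_edge_top:
  assumes g: "g < length es"
  shows "d_edge V es m g (topst v) = (if inE v g then Some (insert g v, topf v) else None)"
proof -
  let ?p = "fst (es!g)" and ?q = "snd (es!g)"
  let ?C = "comp_of es v"
  show ?thesis
  proof (cases "inE v g")
    case True
    then have "?C ?q = ?C ?p" unfolding inE_def by (rule comp_eq)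
    then show ?thesis using True by (simp add: d_edge_def topst_def Let_def)
  next
    case False
    then have ne: "?C ?p \<noteq> ?C ?q" unfolding inE_def using comp_self[of ?q es v] by metis
    have "?C ?p \<in> comps V es v" "?C ?q \<in> comps V es v" using endpts[OF g] by (auto simp: comps_def)
    then have "topf v (?C ?p) + topf v (?C ?q) \<ge> m" using m3 by (simp add: topf_def)
    then show ?thesis using False ne by (simp add: d_edge_def topst_def Let_def)
  qed
qed

definition "a0 s = amin s"
definition "s0 s = s - {amin s}"

context
  fixes s :: "nat set"
  assumes sT: "topst s \<in> states V es m i j" and as: "amin s \<in> s"
begin


lemma sfacts: "s \<subseteq> {..<length es}" "card s = i" "(m - 1) * card (comps V es s) = j"
  using sT top_states by auto

lemma a0n: "(a0 s) < length es" using as sfacts(1) a0_def by auto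

lemma s0facts: "(s0 s) \<subseteq> {..<length es}" "card (s0 s) = i - 1" "card (s0 s) < i" "(a0 s) \<notin> (s0 s)" "insert (a0 s) (s0 s) = s"
  using sfacts as ipos unfolding s0_def a0_def
  by (auto simp: card_Diff_singleton finite_subset)

lemma C12_def': "C1 s = comp_of es (s0 s) (fst (es!(a0 s)))" "C2 s = comp_of es (s0 s) (snd (es!(a0 s)))"
  unfolding C1_def C2_def a0_def s0_def by simp_all

lemma C12_ne: "C1 s \<noteq> C2 s"
proof -
  have "snd (es!(a0 s)) \<notin> comp_of es (s0 s) (fst (es!(a0 s)))"
    using no_short[OF s0facts(1) s0facts(3) a0n s0facts(4)] .
  then show ?thesis unfolding C12_def'
    using comp_self[of "snd (es!(a0 s))" es "s0 s"] by metis
qed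

lemma comps_s: "comps V es s = insert (C1 s \<union> C2 s) (comps V es (s0 s) - {C1 s, C2 s})"
   "card (comps V es s) = card (comps V es (s0 s)) - 1"
  using comps_merge[OF a0n, of "s0 s"] C12_ne s0facts(5) unfolding C12_def' by auto

lemma C12_in: "C1 s \<in> comps V es (s0 s)" "C2 s \<in> comps V es (s0 s)"
  using endpts[OF a0n] unfolding C12_def' by (auto simp: comps_def)

lemma gst_states: "gst s \<in> states V es m (i - 1) j"
proof -
  let ?c = "\<lambda>C. if C = C1 s then 1 else if C = C2 s then m - 2
       else if C \<in> comps V es (s0 s) then m - 1 else (0::nat)"
  have g: "gst s = ((s0 s), ?c)" unfolding gst_def s0_def by simp
  have K2: "card (comps V es (s0 s)) \<ge> 2"
  proof -
    have "card {C1 s, C2 s} \<le> card (comps V es (s0 s))" using C12_in comps_fin by (intro card_mono) auto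
    then show ?thesis using C12_ne by simp
  qed
  have fin: "finite (comps V es (s0 s))" by (rule comps_fin)
  have "(\<Sum>C\<in>comps V es (s0 s). ?c C) = ?c (C1 s) + (\<Sum>C\<in>comps V es (s0 s) - {C1 s}. ?c C)"
    using sum.remove[OF fin C12_in(1)] .
  also have "(\<Sum>C\<in>comps V es (s0 s) - {C1 s}. ?c C) = ?c (C2 s) + (\<Sum>C\<in>comps V es (s0 s) - {C1 s} - {C2 s}. ?c C)"
    using C12_in C12_ne fin by (intro sum.remove) auto
  also have "(\<Sum>C\<in>comps V es (s0 s) - {C1 s} - {C2 s}. ?c C) = (\<Sum>C\<in>comps V es (s0 s) - {C1 s} - {C2 s}. m - 1)"
    by (rule sum.cong) auto
  also have "\<dots> = (m - 1) * (card (comps V es (s0 s)) - 2)"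
    using C12_in C12_ne fin by (simp add: card_Diff_singleton numeral_2_eq_2)
  finally have sum: "(\<Sum>C\<in>comps V es (s0 s). ?c C) = 1 + (m - 2) + (m - 1) * (card (comps V es (s0 s)) - 2)"
    using C12_ne by simp
  have "j = (m - 1) * (card (comps V es (s0 s)) - 1)" using sfacts(3) comps_s(2) by simp
  also have "\<dots> = 1 + (m - 2) + (m - 1) * (card (comps V es (s0 s)) - 2)"
  proof -
    obtain K where K: "card (comps V es (s0 s)) = K + 2" using K2 by (metis add.commute le_Suc_ex)
    have "(m - 1) * (K + 1) = (m - 1) + (m - 1) * K" by simp
    then show ?thesis using K m3 by simp
  qed
  finally have jsum: "(\<Sum>C\<in>comps V es (s0 s). ?c C) = j" using sum by simp
  show ?thesis unfolding g states_def
    using s0facts jsum C12_in m3 by auto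
qed

lemma d_edge_gst:
  assumes e: "e < length es" "e \<notin> (s0 s)"
  shows "d_edge V es m e (gst s) = (if comp_of es (insert e (s0 s)) = comp_of es s
            then Some (topst (insert e (s0 s))) else None)"
proof -
  let ?C = "comp_of es (s0 s)"
  let ?pe = "fst (es!e)" and ?qe = "snd (es!e)" and ?p = "fst (es!(a0 s))" and ?q = "snd (es!(a0 s))"
  let ?Ca = "?C ?pe" and ?Cb = "?C ?qe"
  let ?c = "\<lambda>C. if C = C1 s then 1 else if C = C2 s then m - 2
       else if C \<in> comps V es (s0 s) then m - 1 else (0::nat)"
  have g: "gst s = ((s0 s), ?c)" unfolding gst_def s0_def by simp
  have "?qe \<notin> ?Ca" using no_short[OF s0facts(1) s0facts(3) e] .
  then have ne: "?Ca \<noteq> ?Cb" using comp_self[of ?qe es "s0 s"] by metis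
  have inn: "?Ca \<in> comps V es (s0 s)" "?Cb \<in> comps V es (s0 s)" using endpts[OF e(1)] by (auto simp: comps_def)
  have C12ne: "C1 s \<noteq> C2 s" by (rule C12_ne)
  have cval: "?c X = (if X = C1 s then 1 else if X = C2 s then m - 2 else m - 1)" if "X \<in> comps V es (s0 s)" for X
    using that by simp
  define B where "B \<longleftrightarrow> (?Ca = C1 s \<and> ?Cb = C2 s) \<or> (?Ca = C2 s \<and> ?Cb = C1 s)"
  have small: "?c ?Ca + ?c ?Cb < m \<longleftrightarrow> B"
  proof -
    have gen: "((if X = A1 then 1 else if X = A2 then m - 2 else m - 1) +
                (if Y = A1 then 1 else if Y = A2 then m - 2 else m - 1) < m) \<longleftrightarrow>
               ((X = A1 \<and> Y = A2) \<or> (X = A2 \<and> Y = A1))"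
      if "X \<noteq> Y" "A1 \<noteq> A2" for X Y A1 A2 :: "'a set"
      using that m3 by (cases "X = A1"; cases "X = A2"; cases "Y = A1"; cases "Y = A2") simp_all
    show ?thesis unfolding B_def cval[OF inn(1)] cval[OF inn(2)] by (rule gen[OF ne C12ne])
  qed
  have cs: "comp_of es s = comp_of es (insert (a0 s) (s0 s))" using s0facts(5) by simp
  have Beq: "B \<longleftrightarrow> comp_of es (insert e (s0 s)) = comp_of es s"
  proof
    assume B
    then have "?Ca \<union> ?Cb = C1 s \<union> C2 s" unfolding B_def by auto
    then show "comp_of es (insert e (s0 s)) = comp_of es s"
      unfolding cs by (intro ext) (simp add: comp_insert'[OF e(1)] comp_insert'[OF a0n] C12_def')
  next
    assume h: "comp_of es (insert e (s0 s)) = comp_of es s"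
    have "comp_of es (insert e (s0 s)) ?p = comp_of es (insert (a0 s) (s0 s)) ?p" using h cs by simp
    also have "\<dots> = C1 s \<union> C2 s"
      using comp_self[of ?p es "s0 s"] by (simp add: comp_insert'[OF a0n] C12_def')
    finally have hp: "comp_of es (insert e (s0 s)) ?p = C1 s \<union> C2 s" .
    have pin: "?p \<in> ?Ca \<union> ?Cb"
    proof (rule ccontr)
      assume "?p \<notin> ?Ca \<union> ?Cb"
      then have "?C ?p = C1 s \<union> C2 s" using hp by (simp add: comp_insert'[OF e(1)])
      then have "?q \<in> ?C ?p" using comp_self[of ?q es "s0 s"] C12_def' by auto
      then have "?C ?q = ?C ?p" by (rule comp_eq)
      with C12ne show False by (simp add: C12_def')
    qed
    then have U: "?Ca \<union> ?Cb = C1 s \<union> C2 s" using hp by (simp add: comp_insert'[OF e(1)])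
    have Ca12: "?Ca = C1 s \<or> ?Ca = C2 s"
    proof -
      have "?pe \<in> C1 s \<union> C2 s" using U comp_self[of ?pe es "s0 s"] by auto
      then show ?thesis unfolding C12_def' using comp_eq[of ?pe es "s0 s" ?p] comp_eq[of ?pe es "s0 s" ?q] by auto
    qed
    have Cb12: "?Cb = C1 s \<or> ?Cb = C2 s"
    proof -
      have "?qe \<in> C1 s \<union> C2 s" using U comp_self[of ?qe es "s0 s"] by auto
      then show ?thesis unfolding C12_def' using comp_eq[of ?qe es "s0 s" ?p] comp_eq[of ?qe es "s0 s" ?q] by auto
    qed
    show B unfolding B_def using Ca12 Cb12 ne by auto
  qed
  have res: "(\<lambda>C. if C = ?Ca \<union> ?Cb then ?c ?Ca + ?c ?Cb
                  else if C \<in> comps V es (insert e (s0 s)) then ?c C else 0) = topf (insert e (s0 s))"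
    if B
  proof
    fix C
    have cm: "comps V es (insert e (s0 s)) = insert (?Ca \<union> ?Cb) (comps V es (s0 s) - {?Ca, ?Cb})"
      using comps_merge(1)[OF e(1) ne] .
    have sum: "?c ?Ca + ?c ?Cb = m - 1"
      using \<open>B\<close> C12ne m3 inn unfolding B_def by auto
    show "(if C = ?Ca \<union> ?Cb then ?c ?Ca + ?c ?Cb
                  else if C \<in> comps V es (insert e (s0 s)) then ?c C else 0) = topf (insert e (s0 s)) C"
    proof (cases "C = ?Ca \<union> ?Cb")
      case True then show ?thesis using sum cm by (simp add: topf_def)
    next
      case False
      have "C \<in> comps V es (insert e (s0 s)) \<Longrightarrow> C \<noteq> C1 s \<and> C \<noteq> C2 s \<and> C \<in> comps V es (s0 s)"
        using cm False \<open>B\<close> unfolding B_def by auto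
      then show ?thesis using False by (auto simp: topf_def)
    qed
  qed
  have "d_edge V es m e (gst s) = (if ?Ca = ?Cb then Some (insert e (s0 s), ?c)
      else if ?c ?Ca + ?c ?Cb \<ge> m then None
      else Some (insert e (s0 s), (\<lambda>C. if C = ?Ca \<union> ?Cb then ?c ?Ca + ?c ?Cb
                  else if C \<in> comps V es (insert e (s0 s)) then ?c C else 0)))"
    unfolding g d_edge_def Let_def by simp
  also have "\<dots> = (if B then Some (topst (insert e (s0 s))) else None)"
  proof (cases B)
    case True
    have "\<not> m \<le> ?c ?Ca + ?c ?Cb" using small True by simp
    then show ?thesis using ne True unfolding topst_def res[OF True, symmetric] by (simp only: if_False if_True)
  next
    case False
    have "m \<le> ?c ?Ca + ?c ?Cb" using small False by simp
    then show ?thesis using ne False by (simp only: if_False if_True)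
  qed
  finally show ?thesis using Beq by simp
qed

end


lemma s0_eq: "s0 s = s - {amin s}" by (simp add: s0_def)

definition T0 :: "nat set set" where "T0 = {u. topst u \<in> states V es m i j}"
definition TT :: "nat set set" where "TT = {s\<in>T0. amin s \<in> s}"
definition Ed :: "nat set \<Rightarrow> nat set" where "Ed s = {e. e < length es \<and> e \<notin> s - {amin s}}"

lemma T0_fin: "finite T0"
proof -
  have "T0 \<subseteq> Pow {..<length es}" using top_states by (auto simp: T0_def)
  then show ?thesis by (rule finite_subset) simp
qed

lemma TT_fin: "finite TT" using T0_fin by (simp add: TT_def)

lemma Ed_fin: "finite (Ed s)"
  by (rule finite_subset[of _ "{..<length es}"]) (auto simp: Ed_def)

lemma topst_inj: "topst u = topst v \<Longrightarrow> u = v" by (simp add: topst_def)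

lemma fst_topst[simp]: "fst (topst u) = u" by (simp add: topst_def)

lemma T0_iff: "u \<in> T0 \<longleftrightarrow> u \<subseteq> {..<length es} \<and> card u = i \<and> (m - 1) * card (comps V es u) = j"
  unfolding T0_def using top_states by simp

lemma T0_cong: "u \<in> T0 \<Longrightarrow> v \<subseteq> {..<length es} \<Longrightarrow> card v = i \<Longrightarrow> comp_of es v = comp_of es u \<Longrightarrow> v \<in> T0"
  unfolding T0_iff using comps_cong by metis

definition Phi :: "('a state \<Rightarrow> int) \<Rightarrow> 'a state \<Rightarrow> nat set \<times> nat \<Rightarrow> int" where
  "Phi x t p = (case p of (s, e) \<Rightarrow>
     if comp_of es (insert e (s - {amin s})) = comp_of es s \<and> t = topst (insert e (s - {amin s}))
     then x (topst s) * sgn (s - {amin s}) e else 0)"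

lemma d_state_gst:
  assumes "s \<in> TT"
  shows "d_state V es m (gst s) t = (\<Sum>e\<in>Ed s.
     if comp_of es (insert e (s - {amin s})) = comp_of es s \<and> t = topst (insert e (s - {amin s}))
     then sgn (s - {amin s}) e else 0)"
proof -
  have sT: "topst s \<in> states V es m i j" and as: "amin s \<in> s" using assms by (auto simp: TT_def T0_def)
  have fg: "fst (gst s) = s - {amin s}" by (simp add: gst_def)
  show ?thesis
    unfolding d_state_def fg
  proof (rule sum.cong)
    show "{e. e < length es \<and> e \<notin> s - {amin s}} = Ed s" by (simp add: Ed_def)
  next
    fix e assume "e \<in> Ed s"
    then have e: "e < length es" "e \<notin> s0 s" by (auto simp: Ed_def s0_eq)
    show "(if d_edge V es m e (gst s) = Some t then (- 1) ^ card {f \<in> s - {amin s}. f < e} else 0) =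
       (if comp_of es (insert e (s - {amin s})) = comp_of es s \<and> t = topst (insert e (s - {amin s}))
        then sgn (s - {amin s}) e else 0)"
      using d_edge_gst[OF sT as e] unfolding s0_eq sgn_def by auto
  qed
qed

lemma dco_y:
  "dco V es m (i - 1) j (\<lambda>st. \<Sum>s\<in>TT. if st = gst s then x (topst s) else 0) t
     = (\<Sum>p\<in>Sigma TT Ed. Phi x t p)"
proof -
  let ?A = "states V es m (i - 1) j"
  have "dco V es m (i - 1) j (\<lambda>st. \<Sum>s\<in>TT. if st = gst s then x (topst s) else 0) t
     = (\<Sum>st\<in>?A. \<Sum>s\<in>TT. (if st = gst s then x (topst s) * d_state V es m st t else 0))"
    unfolding dco_def sum_distrib_right by (intro sum.cong refl) simp
  also have "\<dots> = (\<Sum>s\<in>TT. \<Sum>st\<in>?A. (if st = gst s then x (topst s) * d_state V es m st t else 0))"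
    by (rule sum.swap)
  also have "\<dots> = (\<Sum>s\<in>TT. x (topst s) * d_state V es m (gst s) t)"
  proof (rule sum.cong[OF refl])
    fix s assume s: "s \<in> TT"
    then have "gst s \<in> ?A" using gst_states by (auto simp: TT_def T0_def)
    then show "(\<Sum>st\<in>?A. (if st = gst s then x (topst s) * d_state V es m st t else 0)) =
        x (topst s) * d_state V es m (gst s) t"
      using states_fin by simp
  qed
  also have "\<dots> = (\<Sum>s\<in>TT. \<Sum>e\<in>Ed s. Phi x t (s, e))"
  proof (rule sum.cong[OF refl])
    fix s assume s: "s \<in> TT"
    show "x (topst s) * d_state V es m (gst s) t = (\<Sum>e\<in>Ed s. Phi x t (s, e))"
      unfolding d_state_gst[OF s] sum_distrib_left Phi_def by (rule sum.cong) auto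
  qed
  also have "\<dots> = (\<Sum>p\<in>Sigma TT Ed. Phi x t p)"
    using TT_fin Ed_fin by (subst sum.Sigma) auto
  finally show ?thesis .
qed


definition Psi :: "('a state \<Rightarrow> int) \<Rightarrow> 'a state \<Rightarrow> 'a state \<times> nat \<Rightarrow> int" where
  "Psi x w p = (case p of (st, g) \<Rightarrow>
     if d_edge V es m g st = Some w then x st * (-1) ^ card {f\<in>fst st. f < g} else 0)"

definition Ed2 :: "'a state \<Rightarrow> nat set" where "Ed2 st = {g. g < length es \<and> g \<notin> fst st}"

lemma dco_x: "dco V es m i j x w = (\<Sum>p\<in>Sigma (states V es m i j) Ed2. Psi x w p)"
proof -
  have fin2: "finite (Ed2 st)" for st
    by (rule finite_subset[of _ "{..<length es}"]) (auto simp: Ed2_def)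
  have "dco V es m i j x w = (\<Sum>st\<in>states V es m i j. \<Sum>g\<in>Ed2 st. Psi x w (st, g))"
    unfolding dco_def d_state_def sum_distrib_left Psi_def Ed2_def
    by (intro sum.cong refl) auto
  also have "\<dots> = (\<Sum>p\<in>Sigma (states V es m i j) Ed2. Psi x w p)"
    using states_fin fin2 by (subst sum.Sigma) auto
  finally show ?thesis .
qed

lemma Phi_nz:
  assumes p: "(s, e) \<in> Sigma TT Ed" and nz: "Phi x (topst u) (s, e) \<noteq> 0"
  shows "amin s = amin u" "u = insert e (s - {amin s})" "amin s \<in> s" "e \<notin> s - {amin s}"
    "comp_of es s = comp_of es u" "e < length es"
proof -
  from nz have c: "comp_of es (insert e (s - {amin s})) = comp_of es s" "topst u = topst (insert e (s - {amin s}))"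
    by (auto simp: Phi_def split: if_splits)
  show u: "u = insert e (s - {amin s})" using topst_inj[OF c(2)] .
  show cs: "comp_of es s = comp_of es u" using c(1) u by simp
  show "amin s = amin u" using amin_cong[OF cs] .
  show "amin s \<in> s" using p by (auto simp: TT_def)
  show "e \<notin> s - {amin s}" "e < length es" using p by (auto simp: Ed_def)
qed

lemma T0_facts:
  assumes "u \<in> T0"
  shows "u \<subseteq> {..<length es}" "card u = i" "u \<noteq> {}" "finite u"
    "amin u \<in> Fl u" "amin u < length es" "\<And>f. f \<in> Fl u \<Longrightarrow> amin u \<le> f" "u \<subseteq> Fl u"
    "inE u (amin u)"
proof -
  show u: "u \<subseteq> {..<length es}" "card u = i" using assms T0_iff by auto
  show ne: "u \<noteq> {}" using u ipos by auto
  show "finite u" using u finite_subset by blast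
  show "amin u \<in> Fl u" "amin u < length es" "\<And>f. f \<in> Fl u \<Longrightarrow> amin u \<le> f"
    using amin_props[OF u(1) ne] by auto
  show "u \<subseteq> Fl u" using sub_Fl[OF u(1)] .
  show "inE u (amin u)" using amin_props(1)[OF u(1) ne] by (simp add: Fl_def)
qed

lemma key:
  assumes xc: "cochain V es m i j x" and dx: "dco V es m i j x = (\<lambda>_. 0)"
  shows "(\<Sum>p\<in>Sigma TT Ed. Phi x t p) = x t"
proof (cases "\<exists>u\<in>T0. t = topst u")
  case False
  have "t \<notin> states V es m i j"
  proof
    assume "t \<in> states V es m i j"
    from states_top[OF this] obtain u where "t = topst u" "topst u \<in> states V es m i j" by blast
    with False show False by (auto simp: T0_def)
  qed
  then have xt: "x t = 0" using xc unfolding cochain_def by blast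
  have "Phi x t p = 0" if p: "p \<in> Sigma TT Ed" for p
  proof (rule ccontr)
    assume nz: "Phi x t p \<noteq> 0"
    obtain s e where pe: "p = (s, e)" by (cases p)
    from nz pe have c: "comp_of es (insert e (s - {amin s})) = comp_of es s" "t = topst (insert e (s - {amin s}))"
      by (auto simp: Phi_def split: if_splits)
    have sT0: "s \<in> T0" and as: "amin s \<in> s" and e: "e < length es" "e \<notin> s - {amin s}"
      using p pe by (auto simp: TT_def Ed_def)
    have sf: "s \<subseteq> {..<length es}" "card s = i" "finite s" using T0_facts[OF sT0] by auto
    have "card (insert e (s - {amin s})) = i"
      using e sf as ipos by (simp add: card_Diff_singleton)
    moreover have "insert e (s - {amin s}) \<subseteq> {..<length es}" using e sf by auto
    ultimately have "insert e (s - {amin s}) \<in> T0" using T0_cong[OF sT0] c(1) by blast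
    with c(2) False show False by blast
  qed
  then show ?thesis using xt by simp
next
  case True
  then obtain u where uT0: "u \<in> T0" and t: "t = topst u" by blast
  note uf = T0_facts[OF uT0]
  define a where "a = amin u"
  have tu: "x t = x (topst u)" using t by simp
  show ?thesis
  proof (cases "a \<in> u")
    case True
    have uTT: "u \<in> TT" using uT0 True by (simp add: TT_def a_def)
    have aEd: "a \<in> Ed u" using uf(6) by (simp add: Ed_def a_def)
    have "(\<Sum>p\<in>Sigma TT Ed. Phi x t p) = (\<Sum>p\<in>{(u, a)}. Phi x t p)"
    proof (rule sum.mono_neutral_right)
      show "finite (Sigma TT Ed)" using TT_fin Ed_fin by auto
      show "{(u, a)} \<subseteq> Sigma TT Ed" using uTT aEd by auto
      show "\<forall>p\<in>Sigma TT Ed - {(u, a)}. Phi x t p = 0"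
      proof (intro ballI, rule ccontr)
        fix p assume p: "p \<in> Sigma TT Ed - {(u, a)}" and nz: "Phi x t p \<noteq> 0"
        obtain s e where pe: "p = (s, e)" by (cases p)
        note n = Phi_nz[of s e x u, unfolded a_def[symmetric]]
        have ps: "(s, e) \<in> Sigma TT Ed" using p pe by auto
        have nz': "Phi x (topst u) (s, e) \<noteq> 0" using nz pe t by simp
        note n = n[OF ps nz']
        have "e = a" using n(1,2,4) True by auto
        then have "s = u" using n(1,2,3) by auto
        with \<open>e = a\<close> p pe show False by auto
      qed
    qed
    also have "\<dots> = Phi x t (u, a)" by simp
    also have "\<dots> = x (topst u) * sgn (u - {a}) a"
      using True t by (simp add: Phi_def a_def[symmetric] insert_absorb)
    also have "sgn (u - {a}) a = 1"
      unfolding sgn_del using uf(7,8) by (intro sgn_zero) (auto simp: a_def)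
    finally show ?thesis using tu by simp
  next
    case False
    define se where "se e = insert a (u - {e})" for e
    define U' where "U' = {e\<in>u. comp_of es (se e) = comp_of es u}"
    have U'fin: "finite U'" using uf(4) by (simp add: U'_def)
    have ain: "inE u a" using uf(9) by (simp add: a_def)
    have an: "a < length es" using uf(6) by (simp add: a_def)
    have compa: "comp_of es (insert a u) = comp_of es u" using inE_insert[OF an ain] .
    have topfa: "topf (insert a u) = topf u"
      using comps_cong[OF compa] by (simp add: topf_def)
    have seF: "e \<in> u" "e \<noteq> a" "e < length es" "comp_of es (se e) = comp_of es u"
      "amin (se e) = a" "se e - {a} = u - {e}" "se e \<in> T0" "se e \<in> TT" "e \<in> Ed (se e)" "a < e"
      "insert e (se e) = insert a u" "inE (se e) e" "topf (se e) = topf u"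
      if e: "e \<in> U'" for e
    proof -
      show eu: "e \<in> u" and ce: "comp_of es (se e) = comp_of es u" using e by (auto simp: U'_def)
      show ea: "e \<noteq> a" using eu False by auto
      show en: "e < length es" using eu uf(1) by auto
      show am: "amin (se e) = a" using amin_cong[OF ce] by (simp add: a_def)
      show sd: "se e - {a} = u - {e}" using False ea by (auto simp: se_def)
      have "card (se e) = i" using False eu uf(2) uf(4) ipos by (simp add: se_def card_Diff_singleton)
      moreover have "se e \<subseteq> {..<length es}" using uf(1) an by (auto simp: se_def)
      ultimately show sT0: "se e \<in> T0" using T0_cong[OF uT0 _ _ ce] by blast
      show "se e \<in> TT" using sT0 am by (simp add: TT_def se_def)
      show "e \<in> Ed (se e)" using en am sd by (simp add: Ed_def)
      have "e \<in> Fl u" using eu uf(8) by auto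
      then have "a \<le> e" using uf(7) by (simp add: a_def)
      then show "a < e" using ea by simp
      show "insert e (se e) = insert a u" using eu by (auto simp: se_def)
      have "inE u e" using \<open>e \<in> Fl u\<close> by (simp add: Fl_def)
      then show "inE (se e) e" using ce by (simp add: inE_def)
      show "topf (se e) = topf u" using comps_cong[OF ce] by (simp add: topf_def)
    qed
    have injse: "inj_on (\<lambda>e. (se e, e)) U'" by (rule inj_onI) simp
    have injse2: "inj_on (\<lambda>e. (topst (se e), e)) U'" by (rule inj_onI) simp
    have "(\<Sum>p\<in>Sigma TT Ed. Phi x t p) = (\<Sum>p\<in>(\<lambda>e. (se e, e)) ` U'. Phi x t p)"
    proof (rule sum.mono_neutral_right)
      show "finite (Sigma TT Ed)" using TT_fin Ed_fin by auto
      show "(\<lambda>e. (se e, e)) ` U' \<subseteq> Sigma TT Ed" using seF(8,9) by auto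
      show "\<forall>p\<in>Sigma TT Ed - (\<lambda>e. (se e, e)) ` U'. Phi x t p = 0"
      proof (intro ballI, rule ccontr)
        fix p assume p: "p \<in> Sigma TT Ed - (\<lambda>e. (se e, e)) ` U'" and nz: "Phi x t p \<noteq> 0"
        obtain s e where pe: "p = (s, e)" by (cases p)
        have ps: "(s, e) \<in> Sigma TT Ed" using p pe by auto
        have nz': "Phi x (topst u) (s, e) \<noteq> 0" using nz pe t by simp
        note n = Phi_nz[OF ps nz', unfolded a_def[symmetric]]
        have ea: "e \<noteq> a" using n(1,2) False by auto
        have eu: "e \<in> u" using n(2) by auto
        have "u - {e} = s - {a}" using n(1,2,4) by auto
        then have "se e = s" using n(1,3) by (auto simp: se_def)
        then have "e \<in> U'" using eu n(5) by (simp add: U'_def)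
        with \<open>se e = s\<close> p pe show False by auto
      qed
    qed
    also have "\<dots> = (\<Sum>e\<in>U'. Phi x t (se e, e))"
      using sum.reindex[OF injse] by simp
    also have "\<dots> = (\<Sum>e\<in>U'. x (topst (se e)) * sgn (u - {e}) e)"
    proof (rule sum.cong[OF refl])
      fix e assume e: "e \<in> U'"
      have "insert e (u - {e}) = u" using seF(1)[OF e] by auto
      then show "Phi x t (se e, e) = x (topst (se e)) * sgn (u - {e}) e"
        using seF(4,5,6)[OF e] t by (simp add: Phi_def)
    qed
    finally have lhs: "(\<Sum>p\<in>Sigma TT Ed. Phi x t p) = (\<Sum>e\<in>U'. x (topst (se e)) * sgn (u - {e}) e)" .
    define w where "w = topst (insert a u)"
    have "0 = dco V es m i j x w" using dx by simp
    also have "\<dots> = (\<Sum>p\<in>Sigma (states V es m i j) Ed2. Psi x w p)" by (rule dco_x)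
    also have "\<dots> = (\<Sum>p\<in>insert (topst u, a) ((\<lambda>e. (topst (se e), e)) ` U'). Psi x w p)"
    proof (rule sum.mono_neutral_right)
      have fin2: "finite (Ed2 st)" for st
        by (rule finite_subset[of _ "{..<length es}"]) (auto simp: Ed2_def)
      show "finite (Sigma (states V es m i j) Ed2)" using states_fin fin2 by auto
      show "insert (topst u, a) ((\<lambda>e. (topst (se e), e)) ` U') \<subseteq> Sigma (states V es m i j) Ed2"
      proof -
        have "(topst u, a) \<in> Sigma (states V es m i j) Ed2"
          using uT0 an False by (simp add: T0_def Ed2_def)
        moreover have "(topst (se e), e) \<in> Sigma (states V es m i j) Ed2" if e: "e \<in> U'" for e
        proof -
          have "e \<notin> se e" using seF(2)[OF e] by (simp add: se_def)
          then show ?thesis using seF(3,7)[OF e] by (simp add: T0_def Ed2_def)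
        qed
        ultimately show ?thesis by auto
      qed
      show "\<forall>p\<in>Sigma (states V es m i j) Ed2 - insert (topst u, a) ((\<lambda>e. (topst (se e), e)) ` U'). Psi x w p = 0"
      proof (intro ballI, rule ccontr)
        fix p assume p: "p \<in> Sigma (states V es m i j) Ed2 - insert (topst u, a) ((\<lambda>e. (topst (se e), e)) ` U')"
          and nz: "Psi x w p \<noteq> 0"
        obtain st g where pe: "p = (st, g)" by (cases p)
        have stS: "st \<in> states V es m i j" and g: "g < length es" "g \<notin> fst st" using p pe by (auto simp: Ed2_def)
        obtain v where v: "st = topst v" "topst v \<in> states V es m i j" using states_top[OF stS] by blast
        have gv: "g \<notin> v" using g(2) v(1) by simp
        have de: "d_edge V es m g st = Some w" using nz pe by (auto simp: Psi_def split: if_splits)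
        then have ie: "inE v g" and eq: "(insert g v, topf v) = w"
          using d_edge_top[OF g(1), of v] v(1) by (auto split: if_splits)
        then have ins: "insert g v = insert a u" by (simp add: w_def topst_def)
        show False
        proof (cases "g = a")
          case True
          then have "v = u" using ins gv False by (metis Diff_insert_absorb)
          then show False using p pe v(1) True by auto
        next
          case gna: False
          then have gu: "g \<in> u" using ins by auto
          have vse: "v = se g"
          proof -
            have "v = insert g v - {g}" using gv by simp
            also have "\<dots> = insert a u - {g}" using ins by simp
            also have "\<dots> = se g" using gna by (auto simp: se_def)
            finally show ?thesis .
          qed
          have "comp_of es v = comp_of es (insert g v)" using inE_insert[OF g(1) ie] by simp
          also have "\<dots> = comp_of es u" using ins compa by simp
          finally have "g \<in> U'" using gu vse by (simp add: U'_def)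
          then show False using p pe v(1) vse by auto
        qed
      qed
    qed
    also have "\<dots> = Psi x w (topst u, a) + (\<Sum>p\<in>(\<lambda>e. (topst (se e), e)) ` U'. Psi x w p)"
    proof (rule sum.insert)
      show "finite ((\<lambda>e. (topst (se e), e)) ` U')" using U'fin by simp
      show "(topst u, a) \<notin> (\<lambda>e. (topst (se e), e)) ` U'" using seF(2) by auto
    qed
    also have "(\<Sum>p\<in>(\<lambda>e. (topst (se e), e)) ` U'. Psi x w p) = (\<Sum>e\<in>U'. Psi x w (topst (se e), e))"
      using sum.reindex[OF injse2] by simp
    also have "\<dots> = (\<Sum>e\<in>U'. - (x (topst (se e)) * sgn (u - {e}) e))"
    proof (rule sum.cong[OF refl])
      fix e assume e: "e \<in> U'"
      have "d_edge V es m e (topst (se e)) = Some w"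
        using d_edge_top[OF seF(3)[OF e], of "se e"] seF(11,12,13)[OF e] topfa
        by (simp add: w_def topst_def)
      moreover have "sgn (se e) e = - sgn (u - {e}) e"
        unfolding se_def using uf(4) seF(10)[OF e] False by (intro sgn_ins) auto
      ultimately show "Psi x w (topst (se e), e) = - (x (topst (se e)) * sgn (u - {e}) e)"
        by (simp add: Psi_def sgn_def)
    qed
    also have "Psi x w (topst u, a) = x (topst u)"
    proof -
      have "d_edge V es m a (topst u) = Some w"
        using d_edge_top[OF an, of u] ain topfa by (simp add: w_def topst_def)
      moreover have "sgn u a = 1" using uf(7,8) by (intro sgn_zero) (auto simp: a_def)
      ultimately show ?thesis by (simp add: Psi_def sgn_def)
    qed
    finally have "0 = x (topst u) + (\<Sum>e\<in>U'. - (x (topst (se e)) * sgn (u - {e}) e))" .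
    then have "x (topst u) = (\<Sum>e\<in>U'. x (topst (se e)) * sgn (u - {e}) e)"
      by (simp add: sum_negf)
    then show ?thesis using lhs tu by simp
  qed
qed


theorem vanish: "cohom_vanishes V es m i j"
  unfolding cohom_vanishes_def
proof (intro allI impI, elim conjE)
  fix x assume xc: "cochain V es m i j x" and dx: "dco V es m i j x = (\<lambda>_. 0)"
  define y where "y = (\<lambda>st. \<Sum>s\<in>TT. if st = gst s then x (topst s) else 0)"
  have "cochain V es m (i - 1) j y"
    unfolding cochain_def
  proof (intro allI impI)
    fix st assume st: "st \<notin> states V es m (i - 1) j"
    have "(if st = gst s then x (topst s) else 0) = 0" if s: "s \<in> TT" for s
    proof -
      have "gst s \<in> states V es m (i - 1) j" using gst_states s by (auto simp: TT_def T0_def)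
      then show ?thesis using st by auto
    qed
    then show "y st = 0" unfolding y_def by (intro sum.neutral) blast
  qed
  moreover have "dco V es m (i - 1) j y = x"
  proof
    fix t
    show "dco V es m (i - 1) j y t = x t"
      unfolding y_def dco_y using key[OF xc dx] .
  qed
  ultimately show "\<exists>y. cochain V es m (i - 1) j y \<and> dco V es m (i - 1) j y = x" by blast
qed

end

theorem proposition2p8:
  fixes V :: "'a set" and es :: "('a \<times> 'a) list" and m i j :: nat
  assumes "wf_graph V es"
    and "m \<ge> 3"
    and "0 < i" and "enat i < girth es"
    and "j \<ge> (m - 1) * (card V - i)"
  shows "cohom_vanishes V es m i j"
proof -
  interpret L V es m i j using assms by unfold_locales
  show ?thesis by (rule vanish)
qed

end
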